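(* Let $G$ be a torsion-free abelian group, totally ordered compatibly with addition, in which every subset that is bounded below is well-ordered. Then for any strictly increasing sequence $(g_i)_{i\in\mathbb{N}_0}$ in $G$, there exists a sequence $(n_i)_{i\in\mathbb{N}_0}$ of positive integers such that $(g_{n_{i+1}}-g_{n_i})_{i\in\mathbb{N}_0}$ is strictly increasing.
   Context: A total order $\le$ on an abelian group $G$ is compatible with addition if $b\le c$ iff $b+d\le c+d$ for all $b,c,d\in G$. A subset is bounded below if it has a lower bound in $G$, and well-ordered if each nonempty subset has a least element. *)

theory Defs
  imports Main
begin

definition torsion_free_group :: "'a::ab_group_add itself \<Rightarrow> bool" where
  "torsion_free_group _ \<longleftrightarrow>
     (\<forall>(n::nat) (x::'a). n > 0 \<longrightarrow> (\<Sum>_\<in>{..<n}. x) = 0 \<longrightarrow> x = 0)"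

definition bounded_below_well_ordered :: "'a::linorder itself \<Rightarrow> bool" where
  "bounded_below_well_ordered _ \<longleftrightarrow>
     (\<forall>S::'a set. (\<exists>b. \<forall>s\<in>S. b \<le> s) \<longrightarrow>
        (\<forall>T. T \<subseteq> S \<longrightarrow> T \<noteq> {} \<longrightarrow> (\<exists>m\<in>T. \<forall>t\<in>T. m \<le> t)))"

end

theory Submission
  imports Defs
begin

lemma unb:
  fixes g :: "nat \<Rightarrow> 'a::linordered_ab_group_add"
  assumes wo: "bounded_below_well_ordered TYPE('a)"
    and sm: "strict_mono g"
  shows "\<exists>c. 0 < c \<and> X < g c"
proof -
  have "\<exists>j. X < g j"
  proof (rule ccontr)
    assume "\<not> ?thesis"
    hence B: "\<forall>i. g i \<le> X" by (simp add: not_less)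
    let ?S = "range (\<lambda>i. X - g i)"
    have "\<forall>s\<in>?S. 0 \<le> s" using B by (simp add: le_diff_eq)
    hence "\<exists>b. \<forall>s\<in>?S. b \<le> s" by blast
    moreover have "?S \<noteq> {}" by blast
    ultimately have "\<exists>m\<in>?S. \<forall>t\<in>?S. m \<le> t"
      using wo unfolding bounded_below_well_ordered_def
      by (metis order_refl)
    then obtain m where m: "m \<in> ?S" "\<forall>t\<in>?S. m \<le> t" by blast
    then obtain k where k: "m = X - g k" by blast
    have "X - g (Suc k) \<in> ?S" by blast
    with m(2) k have "X - g k \<le> X - g (Suc k)" by blast
    moreover have "g k < g (Suc k)" using sm by (simp add: strict_mono_def)
    ultimately show False by simp
  qed
  then obtain j where "X < g j" by blast
  moreover have "g j < g (Suc j)" using sm by (simp add: strict_mono_def)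
  ultimately show ?thesis by (intro exI[of _ "Suc j"]) simp
qed

theorem lemma4p4:
  fixes g :: "nat \<Rightarrow> 'a::linordered_ab_group_add"
  assumes "torsion_free_group TYPE('a)"
    and "bounded_below_well_ordered TYPE('a)"
    and "strict_mono g"
  shows "\<exists>n :: nat \<Rightarrow> nat. (\<forall>i. n i > 0) \<and> strict_mono (\<lambda>i. g (n (Suc i)) - g (n i))"
proof -
  define h where "h = (\<lambda>a b. SOME c. 0 < c \<and> (g b - g a) + g b < g c)"
  have hp: "0 < h a b \<and> (g b - g a) + g b < g (h a b)" for a b
    unfolding h_def by (rule someI_ex, rule unb[OF assms(2,3)])
  define step where "step = (\<lambda>p::nat\<times>nat. (snd p, h (fst p) (snd p)))"
  define P where "P k = (step ^^ k) (1, 2)" for k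
  define n where "n k = fst (P k)" for k
  have Ps: "P (Suc k) = step (P k)" for k by (simp add: P_def)
  have pos: "\<forall>i. n i > 0"
  proof
    fix i show "n i > 0"
    proof (cases i)
      case 0 then show ?thesis by (simp add: n_def P_def)
    next
      case (Suc j)
      show ?thesis
      proof (cases j)
        case 0 then show ?thesis using Suc by (simp add: n_def P_def step_def)
      next
        case (Suc l)
        have "n i = h (fst (P l)) (snd (P l))" using \<open>i = Suc j\<close> Suc by (simp add: n_def Ps step_def)
        then show ?thesis using hp by metis
      qed
    qed
  qed
  have inc: "g (n (Suc i)) - g (n i) < g (n (Suc (Suc i))) - g (n (Suc i))" for i
  proof -
    have "n (Suc (Suc i)) = h (n i) (n (Suc i))"
      by (simp add: n_def Ps step_def)
    moreover have "g (n (Suc i)) - g (n i) + g (n (Suc i)) < g (h (n i) (n (Suc i)))" using hp by blast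
    ultimately show ?thesis by (simp add: less_diff_eq)
  qed
  have "strict_mono (\<lambda>i. g (n (Suc i)) - g (n i))"
    using inc by (simp add: strict_mono_Suc_iff)
  with pos show ?thesis by blast
qed

end
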